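(* Let $\Lambda$ be a positive $(p-1)$-sphere in $\partial_\infty\mathbf H^{p,q}$ and let $V\subset E$ be a maximal totally isotropic subspace for $\mathbf b$. If $p\geq q+1$, then $\mathbf P(V)\cap\Lambda\neq\emptyset$.
   Context: $E$ is a real vector space of dimension $p+q+1$ ($p\ge2$, $q\ge1$) with a non-degenerate symmetric bilinear form $\mathbf b$ of signature $(p,q+1)$; $\partial_\infty\mathbf H^{p,q}$ is the space of isotropic lines in $E$, viewed as a subset of $\mathbf P(E)$. A maximal totally isotropic subspace is a subspace on which $\mathbf b$ vanishes identically and of maximal dimension $\min\{p,q+1\}$. A triple of distinct isotropic lines $x,y,z$ is positive if $x\oplus y\oplus z$ is $3$-dimensional of signature $(2,1)$; a positive $(p-1)$-sphere is a subset of $\partial_\infty\mathbf H^{p,q}$ homeomorphic to $\mathbf S^{p-1}$ all of whose triples of distinct points are positive. *)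

theory Defs
  imports "HOL-Analysis.Analysis"
begin

text \<open>Points of the projective space P(E): lines of E = real^'n, represented as
  the one-dimensional linear subspaces span {v}, v nonzero.\<close>

definition line_of :: "'a::real_vector \<Rightarrow> 'a set" where
  "line_of v = span {v}"

definition proj_space :: "'a::real_vector set set" where
  "proj_space = {line_of v | v. v \<noteq> 0}"

text \<open>Topology of P(E): quotient topology of E minus 0 under v \<mapsto> line through v.\<close>

definition proj_topology :: "('a::real_normed_vector) set topology" where
  "proj_topology = topology (\<lambda>U. U \<subseteq> proj_space \<and>
      openin (subtopology euclidean (- {0})) {v. v \<noteq> 0 \<and> line_of v \<in> U})"

definition proj_of :: "'a::real_vector set \<Rightarrow> 'a set set" where
  "proj_of W = {line_of v | v. v \<noteq> 0 \<and> v \<in> W}"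

definition pos_index :: "('a::euclidean_space \<Rightarrow> 'a \<Rightarrow> real) \<Rightarrow> 'a set \<Rightarrow> nat" where
  "pos_index b W = Max {dim U | U. subspace U \<and> U \<subseteq> W \<and> (\<forall>u\<in>U. u \<noteq> 0 \<longrightarrow> b u u > 0)}"

definition neg_index :: "('a::euclidean_space \<Rightarrow> 'a \<Rightarrow> real) \<Rightarrow> 'a set \<Rightarrow> nat" where
  "neg_index b W = Max {dim U | U. subspace U \<and> U \<subseteq> W \<and> (\<forall>u\<in>U. u \<noteq> 0 \<longrightarrow> b u u < 0)}"

definition has_signature :: "('a::euclidean_space \<Rightarrow> 'a \<Rightarrow> real) \<Rightarrow> 'a set \<Rightarrow> nat \<Rightarrow> nat \<Rightarrow> bool" where
  "has_signature b W r s \<longleftrightarrow> dim W = r + s \<and> pos_index b W = r \<and> neg_index b W = s"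

text \<open>Boundary of H^{p,q}: isotropic lines.\<close>

definition isotropic_lines :: "('a::euclidean_space \<Rightarrow> 'a \<Rightarrow> real) \<Rightarrow> 'a set set" where
  "isotropic_lines b = {line_of v | v. v \<noteq> 0 \<and> b v v = 0}"

definition positive_triple :: "('a::euclidean_space \<Rightarrow> 'a \<Rightarrow> real) \<Rightarrow> 'a set \<Rightarrow> 'a set \<Rightarrow> 'a set \<Rightarrow> bool" where
  "positive_triple b x y z \<longleftrightarrow>
     x \<in> isotropic_lines b \<and> y \<in> isotropic_lines b \<and> z \<in> isotropic_lines b \<and>
     x \<noteq> y \<and> y \<noteq> z \<and> x \<noteq> z \<and>
     dim (x + y + z) = 3 \<and> has_signature b (x + y + z) 2 1"

text \<open>Positive (p-1)-sphere: subset of the isotropic lines homeomorphic to S^{p-1}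
  (nsphere (p-1), the unit sphere in R^p) all of whose triples of distinct points are positive.\<close>

definition positive_sphere :: "('a::euclidean_space \<Rightarrow> 'a \<Rightarrow> real) \<Rightarrow> nat \<Rightarrow> 'a set set \<Rightarrow> bool" where
  "positive_sphere b p \<Lambda> \<longleftrightarrow>
     \<Lambda> \<subseteq> isotropic_lines b \<and>
     subtopology proj_topology \<Lambda> homeomorphic_space nsphere (p - 1) \<and>
     (\<forall>x\<in>\<Lambda>. \<forall>y\<in>\<Lambda>. \<forall>z\<in>\<Lambda>. x \<noteq> y \<and> y \<noteq> z \<and> x \<noteq> z \<longrightarrow> positive_triple b x y z)"

definition maximal_totally_isotropic :: "('a::euclidean_space \<Rightarrow> 'a \<Rightarrow> real) \<Rightarrow> nat \<Rightarrow> nat \<Rightarrow> 'a set \<Rightarrow> bool" where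
  "maximal_totally_isotropic b p q V \<longleftrightarrow>
     subspace V \<and> (\<forall>x\<in>V. \<forall>y\<in>V. b x y = 0) \<and> dim V = min p (q + 1)"

end

theory Submission
  imports Defs "HOL-Homology.Invariance_of_Domain"
begin


lemma sphere_subspace_facts:
  fixes S :: "'a::euclidean_space set"
  assumes S: "subspace S"
  shows "rel_frontier (cball 0 1 \<inter> S) = sphere 0 1 \<inter> S"
    and "aff_dim (cball 0 1 \<inter> S) = int (dim S)"
    and "convex (cball 0 1 \<inter> S)" "bounded (cball 0 1 \<inter> S)" "compact (cball 0 1 \<inter> S)"
    and "compact (sphere 0 1 \<inter> S)"
proof -
  have "(0::'a) \<in> interior (cball 0 1)" by simp
  then have ne: "interior (cball (0::'a) 1) \<inter> S \<noteq> {}"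
    using S subspace_0 by blast
  have "rel_frontier (cball 0 1 \<inter> S) = frontier (cball 0 1) \<inter> S"
    by (rule convex_affine_rel_frontier_Int) (use S ne subspace_imp_affine in auto)
  then show "rel_frontier (cball 0 1 \<inter> S) = sphere 0 1 \<inter> S" by simp
  have "aff_dim (S \<inter> cball 0 1) = aff_dim S"
    by (rule aff_dim_convex_Int_nonempty_interior) (use S ne subspace_imp_convex in auto)
  then show "aff_dim (cball 0 1 \<inter> S) = int (dim S)"
    by (simp add: Int_commute aff_dim_subspace S)
  show "convex (cball 0 1 \<inter> S)" using S by (simp add: convex_Int subspace_imp_convex)
  show "bounded (cball 0 1 \<inter> S)" by (simp add: bounded_Int)
  show "compact (cball 0 1 \<inter> S)" using S
    by (simp add: closed_subspace compact_Int_closed)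
  show "compact (sphere 0 1 \<inter> S)" using S
    by (simp add: closed_subspace compact_Int_closed)
qed

lemma coincidence:
  fixes X Y :: "'a::euclidean_space \<Rightarrow> 'a" and S P :: "'a set"
  assumes S: "subspace S" and P: "subspace P" and dimSP: "dim S = dim P" and d2: "dim P \<ge> 2"
    and cX: "continuous_on (sphere 0 1 \<inter> S) X" and cY: "continuous_on (sphere 0 1 \<inter> S) Y"
    and Xim: "X ` (sphere 0 1 \<inter> S) \<subseteq> sphere 0 1 \<inter> P"
    and Yim: "Y ` (sphere 0 1 \<inter> S) \<subseteq> sphere 0 1 \<inter> P"
    and injX: "inj_on X (sphere 0 1 \<inter> S)"
    and noant: "\<And>t t'. t \<in> sphere 0 1 \<inter> S \<Longrightarrow> t' \<in> sphere 0 1 \<inter> S \<Longrightarrow> Y t \<noteq> - Y t'"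
  shows "\<exists>t \<in> sphere 0 1 \<inter> S. X t = Y t"
proof -
  define DS where "DS = sphere (0::'a) 1 \<inter> S"
  define SP where "SP = sphere (0::'a) 1 \<inter> P"
  define KS where "KS = cball (0::'a) 1 \<inter> S"
  define KP where "KP = cball (0::'a) 1 \<inter> P"
  note fS = sphere_subspace_facts[OF S] and fP = sphere_subspace_facts[OF P]
  obtain V :: "'a set" where affV: "affine V" and dV: "aff_dim V = int (dim P) - 1"
  proof (rule choose_affine_subset [OF affine_UNIV])
    show "- 1 \<le> int (dim P) - 1" by simp
    show "int (dim P) - 1 \<le> aff_dim (UNIV :: 'a set)"
      using dim_subset_UNIV[of P] by (simp add: aff_dim_UNIV)
  qed auto
  have Vne: "V \<noteq> {}"
  proof
    assume "V = {}" then have "aff_dim V = -1" by simp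
    with dV have "int (dim P) = 0" by linarith
    with d2 show False by linarith
  qed
  have punct: "SP - {c} homeomorphic V" if "c \<in> SP" for c
  proof -
    have "rel_frontier KP - {c} homeomorphic V"
      by (rule homeomorphic_punctured_sphere_affine_gen)
         (use fP that affV dV in \<open>auto simp: KP_def SP_def\<close>)
    then show ?thesis using fP by (simp add: KP_def SP_def)
  qed
  obtain t0 where t0: "t0 \<in> DS"
  proof -
    obtain e where "e \<in> S" "e \<noteq> 0"
    proof (rule ccontr)
      assume "\<not> thesis"
      with that have "S \<subseteq> {0}" by blast
      then have "dim S = 0" by (simp add: dim_eq_0)
      with d2 dimSP show False by simp
    qed
    then have "e /\<^sub>R norm e \<in> DS" using S by (simp add: DS_def subspace_scale)
    then show ?thesis using that by blast
  qed
  have surj: "X ` DS = SP"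
  proof (rule ccontr)
    assume "X ` DS \<noteq> SP"
    moreover have "X ` DS \<subseteq> SP" using Xim by (simp add: DS_def SP_def)
    ultimately obtain c where c: "c \<in> SP" "c \<notin> X ` DS" by blast
    obtain j k where jk: "homeomorphism (SP - {c}) V j k"
      using punct[OF c(1)] by (auto simp: homeomorphic_def)
    have XD: "X ` DS \<subseteq> SP - {c}" using Xim c by (auto simp: DS_def SP_def)
    have cj: "continuous_on DS (j \<circ> X)"
      by (rule continuous_on_compose) (use cX jk XD in \<open>auto simp: DS_def homeomorphism_def intro: continuous_on_subset\<close>)
    have ij: "inj_on (j \<circ> X) DS"
      using injX jk XD unfolding DS_def inj_on_def homeomorphism_def
      by (metis (no_types, lifting) comp_apply image_subset_iff)
    have jim: "(j \<circ> X) ` DS \<subseteq> V" using jk XD by (auto simp: homeomorphism_def)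
    then have jim': "(j \<circ> X) \<in> DS \<rightarrow> V" by auto
    have op: "openin (top_of_set V) ((j \<circ> X) ` DS)"
    proof (rule invariance_of_domain_sphere_affine_set_gen [OF cj ij jim, of KS])
      show "bounded KS" "convex KS" using fS by (auto simp: KS_def)
      show "affine V" by fact
      show "aff_dim V < aff_dim KS" using fS dV dimSP by (simp add: KS_def)
      show "openin (top_of_set (rel_frontier KS)) DS" using fS by (simp add: KS_def DS_def)
    qed
    have cpt: "compact ((j \<circ> X) ` DS)"
      using compact_continuous_image[OF cj] fS by (simp add: DS_def)
    have cl: "closedin (top_of_set V) ((j \<circ> X) ` DS)"
      using cpt jim by (simp add: closed_subset compact_imp_closed)
    have "(j \<circ> X) ` DS = V"
      using connected_clopen[THEN iffD1, OF convex_connected[OF affine_imp_convex[OF affV]]] op cl t0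
      by blast
    then have "bounded V" using cpt compact_imp_bounded by metis
    then have "aff_dim V \<le> 0" using affine_bounded_eq_lowdim affV by blast
    then show False using dV d2 by simp
  qed
  obtain g where g: "homeomorphism DS SP X g"
    using homeomorphism_compact[OF _ _ surj] fS cX injX by (auto simp: DS_def)
  define c where "c = - Y t0"
  have "Y t0 \<in> SP" using Yim t0 unfolding DS_def SP_def by blast
  then have cSP: "c \<in> SP" using P by (auto simp: c_def SP_def subspace_neg)
  define h where "h = Y \<circ> g"
  have ch: "continuous_on SP h"
    unfolding h_def
    by (rule continuous_on_compose) (use g cY in \<open>auto simp: homeomorphism_def DS_def\<close>)
  have him: "h ` SP \<subseteq> SP - {c}"
  proof
    fix y assume "y \<in> h ` SP"
    then obtain x where x: "x \<in> SP" "y = Y (g x)" by (auto simp: h_def)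
    have gx: "g x \<in> DS" using g x by (auto simp: homeomorphism_def)
    then have "y \<in> SP" using Yim x unfolding DS_def SP_def by blast
    moreover have "y \<noteq> c" using noant[of "g x" t0] gx t0 x by (auto simp: c_def DS_def)
    ultimately show "y \<in> SP - {c}" by auto
  qed
  have AR: "AR (SP - {c})"
    using AR_homeomorphic_AR[OF convex_imp_AR[OF affine_imp_convex[OF affV] Vne] punct[OF cSP]] .
  have clo: "closedin (top_of_set KP) SP"
    using fP by (auto simp: KP_def SP_def intro!: closed_subset compact_imp_closed)
  obtain H where H: "continuous_on KP H" "H ` KP \<subseteq> SP - {c}" "\<And>x. x \<in> SP \<Longrightarrow> H x = h x"
    using AR_imp_absolute_extensor[OF AR ch him clo] by blast
  have "\<exists>x\<in>KP. H x = x"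
  proof (rule brouwer)
    show "compact KP" "convex KP" using fP by (auto simp: KP_def)
    have "0 \<in> KP" using P subspace_0 by (auto simp: KP_def)
    then show "KP \<noteq> {}" by blast
    show "continuous_on KP H" by fact
    show "H \<in> KP \<rightarrow> KP" using H(2) by (auto simp: KP_def SP_def)
  qed blast
  then obtain x where x: "x \<in> KP" "H x = x" by blast
  then have xSP: "x \<in> SP" using H(2) by auto
  have "Y (g x) = x" using H(3)[OF xSP] x by (simp add: h_def)
  moreover have "X (g x) = x" using g xSP by (simp add: homeomorphism_def)
  moreover have "g x \<in> DS" using g xSP by (auto simp: homeomorphism_def)
  ultimately show ?thesis unfolding DS_def by (metis)
qed


locale bform =
  fixes b :: "real^'n \<Rightarrow> real^'n \<Rightarrow> real"
  assumes bil: "bilinear b" and symm: "\<And>x y. b x y = b y x"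
begin

lemmas bs = bilinear_ladd[OF bil] bilinear_radd[OF bil] bilinear_lmul[OF bil] bilinear_rmul[OF bil]
  bilinear_lsub[OF bil] bilinear_rsub[OF bil] bilinear_lneg[OF bil] bilinear_rneg[OF bil]
  bilinear_lzero[OF bil] bilinear_rzero[OF bil]

lemma finite_dims: "finite {dim U | U::(real^'n) set. Q U}"
proof -
  have "{dim U | U::(real^'n) set. Q U} \<subseteq> {..DIM(real^'n)}"
    using dim_subset_UNIV by fastforce
  then show ?thesis using finite_subset by blast
qed

lemma pos_index_witness:
  assumes "subspace W" shows "\<exists>U. subspace U \<and> U \<subseteq> W \<and> (\<forall>u\<in>U. u \<noteq> 0 \<longrightarrow> b u u > 0) \<and> dim U = pos_index b W"
proof -
  let ?S = "{dim U | U. subspace U \<and> U \<subseteq> W \<and> (\<forall>u\<in>U. u \<noteq> 0 \<longrightarrow> b u u > 0)}"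
  have "dim {0::real^'n} \<in> ?S" using assms subspace_0 by (auto intro!: exI[of _ "{0}"])
  then have "?S \<noteq> {}" by blast
  then have "Max ?S \<in> ?S" using finite_dims by (intro Max_in) auto
  then show ?thesis unfolding pos_index_def by auto
qed

lemma pos_index_max:
  assumes "subspace U" "U \<subseteq> W" "\<forall>u\<in>U. u \<noteq> 0 \<longrightarrow> b u u > 0"
  shows "dim U \<le> pos_index b W"
  unfolding pos_index_def using assms finite_dims by (intro Max_ge) auto

lemma neg_index_witness:
  assumes "subspace W" shows "\<exists>U. subspace U \<and> U \<subseteq> W \<and> (\<forall>u\<in>U. u \<noteq> 0 \<longrightarrow> b u u < 0) \<and> dim U = neg_index b W"
proof -
  let ?S = "{dim U | U. subspace U \<and> U \<subseteq> W \<and> (\<forall>u\<in>U. u \<noteq> 0 \<longrightarrow> b u u < 0)}"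
  have "dim {0::real^'n} \<in> ?S" using assms subspace_0 by (auto intro!: exI[of _ "{0}"])
  then have "?S \<noteq> {}" by blast
  then have "Max ?S \<in> ?S" using finite_dims by (intro Max_in) auto
  then show ?thesis unfolding neg_index_def by auto
qed

lemma nonzero_in_Int:
  fixes A B :: "(real^'n) set"
  assumes "subspace A" "subspace B" "A \<subseteq> W" "B \<subseteq> W" "subspace W" "dim A + dim B > dim W"
  shows "\<exists>z. z \<in> A \<and> z \<in> B \<and> z \<noteq> 0"
proof (rule ccontr)
  assume "\<not> ?thesis"
  then have "A \<inter> B \<subseteq> {0}" by blast
  then have d0: "dim (A \<inter> B) = 0" by (simp add: dim_eq_0)
  have "{x + y |x y. x \<in> A \<and> y \<in> B} \<subseteq> W"
    using assms subspace_add by blast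
  then have "dim {x + y |x y. x \<in> A \<and> y \<in> B} \<le> dim W" by (rule dim_subset)
  with dim_sums_Int[OF assms(1,2)] d0 assms(6) show False by linarith
qed

lemma no_nonpos_plane:
  assumes sig: "has_signature b W 2 1" and W: "subspace W"
    and PL: "subspace PL" "PL \<subseteq> W" "dim PL \<ge> 2" "\<forall>z\<in>PL. b z z \<le> 0"
  shows False
proof -
  obtain Q where Q: "subspace Q" "Q \<subseteq> W" "\<forall>u\<in>Q. u \<noteq> 0 \<longrightarrow> b u u > 0" "dim Q = 2"
    using pos_index_witness[OF W] sig by (auto simp: has_signature_def)
  have "dim W = 3" using sig by (simp add: has_signature_def)
  then obtain z where "z \<in> Q" "z \<in> PL" "z \<noteq> 0"
    using nonzero_in_Int[OF Q(1) PL(1) Q(2) PL(2) W] Q(4) PL(3) by auto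
  then show False using Q(3) PL(4) by force
qed

lemma in_span2: "z \<in> span {u, v} \<Longrightarrow> \<exists>\<alpha> \<beta>. z = \<alpha> *\<^sub>R u + \<beta> *\<^sub>R v"
  by (auto simp: span_insert span_singleton) (metis diff_add_cancel add.commute)

lemma line_sum: "line_of u + line_of v + line_of w = span {u, v, w}"
proof -
  have "{u, v, w} = {u} \<union> {v} \<union> {w}" by auto
  then have "span {u, v, w} = span ({u} \<union> {v} \<union> {w})" by simp
  also have "\<dots> = line_of u + line_of v + line_of w"
    unfolding span_Un line_of_def set_plus_def by blast
  finally show ?thesis by simp
qed

lemma dim_span3_le: "dim (span {w::real^'n, u, v}) \<le> dim (span {u, v}) + 1"
  using dim_insert[of w "{u,v}"] by (auto split: if_splits)

lemma triple_sig:
  assumes "positive_triple b (line_of x) (line_of y) (line_of z)"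
  shows "has_signature b (span {x, y, z}) 2 1" "dim (span {x, y, z}) = 3"
  using assms line_sum[of x y z] by (auto simp: positive_triple_def)

lemma T1:
  assumes sig: "has_signature b (span {w, u, v}) 2 1" and d3: "dim (span {w, u, v}) = 3"
    and uu: "b u u = 0" and vv: "b v v = 0"
  shows "b u v \<noteq> 0"
proof
  assume d: "b u v = 0"
  show False
  proof (rule no_nonpos_plane[OF sig subspace_span])
    show "subspace (span {u, v})" by simp
    show "span {u, v} \<subseteq> span {w, u, v}" by (rule span_mono) auto
    show "2 \<le> dim (span {u, v})" using dim_span3_le[of w u v] d3 by simp
    show "\<forall>z\<in>span {u, v}. b z z \<le> 0"
    proof
      fix z assume "z \<in> span {u, v}"
      then obtain \<alpha> \<beta> where z: "z = \<alpha> *\<^sub>R u + \<beta> *\<^sub>R v" using in_span2 by blast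
      have "b z z = 0" unfolding z using uu vv d by (simp add: bs symm[of v u])
      then show "b z z \<le> 0" by simp
    qed
  qed
qed

lemma T2:
  assumes sig: "has_signature b (span {w, u, v}) 2 1" and d3: "dim (span {w, u, v}) = 3"
    and ww: "b w w = 0" and uu: "b u u = 0" and vv: "b v v = 0"
    and a: "b w u < 0" and c: "b w v < 0"
  shows "b u v < 0"
proof (rule ccontr)
  assume d: "\<not> b u v < 0"
  define a where "a = b w u"
  define c where "c = b w v"
  define m where "m = c *\<^sub>R u - a *\<^sub>R v"
  show False
  proof (rule no_nonpos_plane[OF sig subspace_span])
    show "subspace (span {w, m})" by simp
    have "m \<in> span {w, u, v}" unfolding m_def
      by (intro span_diff span_mul span_base) auto
    then show "span {w, m} \<subseteq> span {w, u, v}"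
      by (intro span_minimal) (auto intro: span_base)
    have "u = (1 / c) *\<^sub>R (m + a *\<^sub>R v)" using c by (simp add: m_def c_def)
    also have "\<dots> \<in> span {v, w, m}"
      by (intro span_mul span_add span_base) auto
    finally have "{w, u, v} \<subseteq> span {v, w, m}" by (auto intro: span_base)
    then have "span {w, u, v} \<subseteq> span {v, w, m}" by (rule span_minimal) simp
    then have "dim (span {w, u, v}) \<le> dim (span {v, w, m})" by (rule dim_subset)
    then show "2 \<le> dim (span {w, m})" using dim_span3_le[of v w m] d3 by simp
    show "\<forall>z\<in>span {w, m}. b z z \<le> 0"
    proof
      fix z assume "z \<in> span {w, m}"
      then obtain \<alpha> \<beta> where z: "z = \<alpha> *\<^sub>R w + \<beta> *\<^sub>R m" using in_span2 by blast
      have "b z z = - 2 * (a * c) * b u v * \<beta>\<^sup>2"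
        unfolding z m_def using ww uu vv
        by (simp add: bs symm[of v u] symm[of u w] symm[of v w] a_def c_def algebra_simps power2_eq_square)
      moreover have "a * c > 0" using a c by (simp add: a_def c_def mult_neg_neg)
      moreover have "b u v \<ge> 0" using d by simp
      ultimately show "b z z \<le> 0" by (simp add: mult_nonneg_nonneg)
    qed
  qed
qed

definition rr :: "real^'n \<Rightarrow> real^'n" where
  "rr e = (\<Sum>i\<in>Basis. b i e *\<^sub>R i)"

lemma rr_inner: "rr e \<bullet> v = b v e"
proof -
  have lin: "linear (\<lambda>x. b x e)" using bil by (simp add: bilinear_def)
  have "b v e = b (\<Sum>i\<in>Basis. (v \<bullet> i) *\<^sub>R i) e" by (simp add: euclidean_representation)
  also have "\<dots> = (\<Sum>i\<in>Basis. (v \<bullet> i) * b i e)"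
    by (simp add: linear_sum[OF lin] linear_scale[OF lin] o_def)
  also have "\<dots> = rr e \<bullet> v"
    by (simp add: rr_def inner_sum_left inner_commute mult.commute inner_sum_right)
  finally show ?thesis by simp
qed

lemma linear_rr: "linear rr"
proof (rule linearI)
  fix x y show "rr (x + y) = rr x + rr y"
    by (simp add: rr_def bs scaleR_add_left sum.distrib)
next
  fix c x show "rr (c *\<^sub>R x) = c *\<^sub>R rr x"
    by (simp add: rr_def bs scaleR_sum_right)
qed

lemma decomp_exists:
  assumes sig: "has_signature b UNIV p r"
  shows "\<exists>P N. subspace P \<and> subspace N \<and> dim P = p \<and> dim N = r \<and>
     (\<forall>x\<in>P. x \<noteq> 0 \<longrightarrow> b x x > 0) \<and> (\<forall>y\<in>N. y \<noteq> 0 \<longrightarrow> b y y < 0) \<and>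
     (\<forall>x\<in>P. \<forall>y\<in>N. b x y = 0) \<and> (\<forall>u. \<exists>x\<in>P. \<exists>y\<in>N. u = x + y)"
proof -
  have dU: "dim (UNIV :: (real^'n) set) = p + r" using sig by (simp add: has_signature_def)
  obtain P where P: "subspace P" "\<forall>x\<in>P. x \<noteq> 0 \<longrightarrow> b x x > 0" "dim P = p"
    using pos_index_witness[OF subspace_UNIV] sig by (auto simp: has_signature_def)
  obtain M where M: "subspace M" "\<forall>x\<in>M. x \<noteq> 0 \<longrightarrow> b x x < 0" "dim M = r"
    using neg_index_witness[OF subspace_UNIV] sig by (auto simp: has_signature_def)
  define N where "N = {v. \<forall>e\<in>P. b v e = 0}"
  have subN: "subspace N"
    unfolding N_def subspace_def by (simp add: bs)
  have orth: "\<forall>x\<in>P. \<forall>y\<in>N. b x y = 0" by (auto simp: N_def symm)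
  have PN0: "\<And>v. v \<in> P \<Longrightarrow> v \<in> N \<Longrightarrow> v = 0"
    using P(2) by (force simp: N_def)
  have Neq: "N = {y \<in> UNIV. \<forall>x \<in> rr ` P. orthogonal x y}"
    by (auto simp: N_def orthogonal_def rr_inner)
  have subA: "subspace (rr ` P)" using linear_subspace_image[OF linear_rr P(1)] .
  have "dim (rr ` P) \<le> dim P" using linear_rr by (rule dim_image_le)
  moreover have "dim N + dim (rr ` P) = dim (UNIV :: (real^'n) set)"
    unfolding Neq by (rule dim_subspace_orthogonal_to_vectors) (use subA in auto)
  ultimately have dNge: "dim N \<ge> r" using dU P(3) by linarith
  have negN: "\<forall>y\<in>N. y \<noteq> 0 \<longrightarrow> b y y < 0"
  proof (intro ballI impI, rule ccontr)
    fix v assume v: "v \<in> N" "v \<noteq> 0" "\<not> b v v < 0"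
    have vP: "v \<notin> span P" using PN0 v P(1) by (auto simp: span_eq_iff[THEN iffD2])
    define W where "W = span (insert v P)"
    have dW: "dim W = p + 1" using vP P(3) by (simp add: W_def dim_insert)
    have semi: "b z z \<ge> 0" if zW: "z \<in> W" for z
    proof -
      obtain k where "z - k *\<^sub>R v \<in> span P" using zW unfolding W_def span_insert by blast
      then obtain x where x: "x \<in> P" "z = x + k *\<^sub>R v" using P(1)
        by (metis add.commute diff_add_cancel span_eq_iff)
      have bxv: "b x v = 0" using orth x(1) v(1) by blast
      have "b z z = b x x + k * k * b v v" using bxv
        by (simp add: x bs symm[of v x] algebra_simps)
      moreover have "b x x \<ge> 0" using P(2) x(1) by (cases "x = 0") (auto simp: bs less_imp_le)
      moreover have "b v v \<ge> 0" using v by simp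
      ultimately show ?thesis by simp
    qed
    obtain z where "z \<in> W" "z \<in> M" "z \<noteq> 0"
      using nonzero_in_Int[of W M UNIV] M dW dU by (auto simp: W_def)
    then show False using semi M(2) by force
  qed
  define S where "S = {x + y |x y. x \<in> P \<and> y \<in> N}"
  have subS: "subspace S" unfolding S_def using P(1) subN by (rule subspace_sums)
  have "P \<inter> N \<subseteq> {0}" using PN0 by blast
  then have dI: "dim (P \<inter> N) = 0" by (simp add: dim_eq_0)
  have dS: "dim S + 0 = p + dim N" using dim_sums_Int[OF P(1) subN] dI P(3) by (simp add: S_def)
  have "dim S \<le> p + r" using dim_subset_UNIV[of S] dU by simp
  then have dN: "dim N = r" using dS dNge by linarith
  have "dim S = DIM(real^'n)" using dS dN dU by simp
  then have "span S = UNIV" by (rule dim_eq_full[THEN iffD1])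
  then have "S = UNIV" using subS by (metis span_eq_iff)
  then have "\<forall>u. \<exists>x\<in>P. \<exists>y\<in>N. u = x + y" unfolding S_def set_eq_iff by blast
  then show ?thesis using P subN dN negN orth by blast
qed

end


locale decomp = bform b for b :: "real^'n \<Rightarrow> real^'n \<Rightarrow> real" +
  fixes P N :: "(real^'n) set"
  assumes subP: "subspace P" and subN: "subspace N"
    and posP: "\<forall>x\<in>P. x \<noteq> 0 \<longrightarrow> b x x > 0" and negN: "\<forall>y\<in>N. y \<noteq> 0 \<longrightarrow> b y y < 0"
    and orthPN: "\<forall>x\<in>P. \<forall>y\<in>N. b x y = 0" and sumPN: "\<forall>u. \<exists>x\<in>P. \<exists>y\<in>N. u = x + y"
begin

lemma PN0: "v \<in> P \<Longrightarrow> v \<in> N \<Longrightarrow> v = 0"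
  using posP orthPN by force

lemma decomp_unique:
  assumes "x \<in> P" "y \<in> N" "x' \<in> P" "y' \<in> N" "x + y = x' + y'"
  shows "x = x'"
proof -
  have "x - x' = y' - y" using assms(5) by (simp add: algebra_simps)
  moreover have "x - x' \<in> P" using assms subP subspace_diff by blast
  moreover have "y' - y \<in> N" using assms subN subspace_diff by blast
  ultimately have "x - x' = 0" using PN0 by metis
  then show ?thesis by simp
qed

definition pp :: "real^'n \<Rightarrow> real^'n" where "pp u = (THE x. x \<in> P \<and> u - x \<in> N)"
definition pn :: "real^'n \<Rightarrow> real^'n" where "pn u = u - pp u"

lemma pp_char: "pp u \<in> P \<and> u - pp u \<in> N"
proof -
  obtain x y where xy: "x \<in> P" "y \<in> N" "u = x + y" using sumPN by blast
  have "x \<in> P \<and> u - x \<in> N" using xy by simp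
  moreover have "z = x" if "z \<in> P \<and> u - z \<in> N" for z
    using decomp_unique[of z "u - z" x y] that xy by simp
  ultimately have "(THE x. x \<in> P \<and> u - x \<in> N) = x" by (rule the_equality)
  then show ?thesis using xy by (simp add: pp_def)
qed

lemma pp_in: "pp u \<in> P" and pn_in: "pn u \<in> N" and pp_pn: "pp u + pn u = u"
  using pp_char by (auto simp: pn_def)

lemma pp_eq: "x \<in> P \<Longrightarrow> y \<in> N \<Longrightarrow> pp (x + y) = x"
  using decomp_unique[of "pp (x+y)" "pn (x+y)" x y] pp_in pn_in pp_pn by metis

lemma linear_pp: "linear pp"
proof (rule linearI)
  fix u v
  have e: "(pp u + pp v) + (pn u + pn v) = (pp u + pn u) + (pp v + pn v)" by (simp add: ac_simps)
  have "pp (u + v) = pp ((pp u + pp v) + (pn u + pn v))" unfolding e pp_pn ..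
  also have "\<dots> = pp u + pp v"
    by (rule pp_eq) (use pp_in pn_in subP subN subspace_add in blast)+
  finally show "pp (u + v) = pp u + pp v" .
next
  fix c u
  have "pp (c *\<^sub>R u) = pp (c *\<^sub>R (pp u + pn u))" unfolding pp_pn ..
  also have "\<dots> = pp (c *\<^sub>R pp u + c *\<^sub>R pn u)" by (simp only: scaleR_add_right)
  also have "\<dots> = c *\<^sub>R pp u"
    by (rule pp_eq) (use pp_in pn_in subP subN subspace_scale in blast)+
  finally show "pp (c *\<^sub>R u) = c *\<^sub>R pp u" .
qed

lemma linear_pn: "linear pn"
proof -
  have "linear (\<lambda>x::real^'n. x)" by (rule linearI) auto
  then show ?thesis unfolding pn_def by (intro linear_compose_sub linear_pp)
qed

lemma b_split: "b u v = b (pp u) (pp v) + b (pn u) (pn v)"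
proof -
  have "b u v = b (pp u + pn u) (pp v + pn v)" using pp_pn by simp
  also have "\<dots> = b (pp u) (pp v) + b (pn u) (pn v)"
    using orthPN pp_in pn_in by (simp add: bs symm[of "pn u"])
  finally show ?thesis .
qed

lemma P_semi: "x \<in> P \<Longrightarrow> b x x \<ge> 0"
  using posP by (cases "x = 0") (auto simp: bs less_imp_le)

lemma iso_pp_pos: "b u u = 0 \<Longrightarrow> u \<noteq> 0 \<Longrightarrow> b (pp u) (pp u) > 0"
proof (rule ccontr)
  assume u: "b u u = 0" "u \<noteq> 0" "\<not> b (pp u) (pp u) > 0"
  then have "pp u = 0" using posP pp_in by blast
  then have "pn u = u" using pp_pn by (metis add_0)
  then have "b u u < 0" using negN pn_in u(2) by metis
  then show False using u by simp
qed

lemma P_cs: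
  assumes "x \<in> P" "y \<in> P" "b x x = 1" "b y y = 1"
  shows "b x y \<le> 1" "- 1 \<le> b x y"
proof -
  have "x - y \<in> P" "x + y \<in> P" using assms subP subspace_diff subspace_add by blast+
  then have "b (x - y) (x - y) \<ge> 0" "b (x + y) (x + y) \<ge> 0" using P_semi by blast+
  then show "b x y \<le> 1" "- 1 \<le> b x y" using assms by (simp_all add: bs symm[of y x])
qed

end

locale decompV = decomp b P N for b :: "real^'n \<Rightarrow> real^'n \<Rightarrow> real" and P N +
  fixes V :: "(real^'n) set"
  assumes subV: "subspace V" and isoV: "\<forall>x\<in>V. \<forall>y\<in>V. b x y = 0" and dimV: "dim V = dim N"
begin

lemma pn_inj: "inj_on pn V"
proof (rule linear_inj_on_iff_eq_0[THEN iffD2, OF linear_pn subV], intro ballI impI)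
  fix v assume v: "v \<in> V" "pn v = 0"
  then have "pp v = v" using pp_pn by (metis add_0_right)
  then have "v \<in> P" using pp_in by metis
  moreover have "b v v = 0" using isoV v by blast
  ultimately show "v = 0" using posP by force
qed

lemma pn_onto: "pn ` V = N"
proof (rule subspace_dim_equal)
  show "subspace (pn ` V)" using linear_subspace_image[OF linear_pn subV] .
  show "subspace N" by (rule subN)
  show "pn ` V \<subseteq> N" using pn_in by blast
  have "dim (pn ` V) = dim V"
    by (rule dim_image_eq[OF linear_pn]) (use pn_inj subV in \<open>simp add: span_eq_iff[THEN iffD2]\<close>)
  then show "dim N \<le> dim (pn ` V)" using dimV by simp
qed

definition gv :: "real^'n \<Rightarrow> real^'n" where "gv u = (THE w. w \<in> V \<and> pn w = pn u)"

lemma gv_char: "gv u \<in> V \<and> pn (gv u) = pn u"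
proof -
  obtain w where w: "w \<in> V" "pn w = pn u" using pn_onto pn_in by (metis imageE)
  have "(THE w. w \<in> V \<and> pn w = pn u) = w"
    by (rule the_equality) (use w pn_inj in \<open>auto simp: inj_on_def\<close>)
  then show ?thesis using w by (simp add: gv_def)
qed

lemma gv_eq: "w \<in> V \<Longrightarrow> pn w = pn u \<Longrightarrow> gv u = w"
  using gv_char pn_inj by (metis inj_on_def)

lemma linear_gv: "linear gv"
proof (rule linearI)
  fix u v show "gv (u + v) = gv u + gv v"
  proof (rule gv_eq)
    show "gv u + gv v \<in> V" using gv_char[of u] gv_char[of v] subspace_add[OF subV] by blast
    show "pn (gv u + gv v) = pn (u + v)"
      using gv_char[of u] gv_char[of v] linear_add[OF linear_pn] by simp
  qed
next
  fix c u show "gv (c *\<^sub>R u) = c *\<^sub>R gv u"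
  proof (rule gv_eq)
    show "c *\<^sub>R gv u \<in> V" using gv_char[of u] subspace_scale[OF subV] by blast
    show "pn (c *\<^sub>R gv u) = pn (c *\<^sub>R u)"
      using gv_char[of u] linear_scale[OF linear_pn] by simp
  qed
qed

definition Yl :: "real^'n \<Rightarrow> real^'n" where "Yl u = pp (gv u)"

lemma linear_Yl: "linear Yl"
  unfolding Yl_def using linear_compose[OF linear_gv linear_pp] by (simp add: o_def)

lemma Yl_in: "Yl u \<in> P" by (simp add: Yl_def pp_in)

lemma b_Yl: "b (Yl u) (Yl v) = - b (pn u) (pn v)"
proof -
  have "0 = b (gv u) (gv v)" using isoV gv_char by metis
  also have "\<dots> = b (Yl u) (Yl v) + b (pn u) (pn v)"
    using b_split[of "gv u" "gv v"] gv_char by (simp add: Yl_def)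
  finally show ?thesis by simp
qed

lemma Yl_fix: "pp u = Yl u \<Longrightarrow> u \<in> V"
proof -
  assume "pp u = Yl u"
  then have "u = pp (gv u) + pn (gv u)" using pp_pn[of u] gv_char by (simp add: Yl_def)
  then have "u = gv u" using pp_pn by metis
  then show "u \<in> V" using gv_char by metis
qed

end



lemma mem_line: "w \<in> line_of v \<longleftrightarrow> (\<exists>c. w = c *\<^sub>R v)"
  by (auto simp: line_of_def span_singleton)

lemma line_eq:
  assumes "line_of w = line_of v" "w \<noteq> 0"
  shows "\<exists>c. c \<noteq> 0 \<and> w = c *\<^sub>R v"
proof -
  have "w \<in> line_of w" by (auto simp: mem_line intro: exI[of _ 1])
  then obtain c where "w = c *\<^sub>R v" using assms mem_line by blast
  then show ?thesis using assms(2) by auto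
qed

lemma line_scale: assumes "c \<noteq> 0" shows "line_of (c *\<^sub>R v) = line_of v"
proof (rule Set.set_eqI)
  fix w
  have "(\<exists>k. w = k *\<^sub>R c *\<^sub>R v) \<longleftrightarrow> (\<exists>k. w = k *\<^sub>R v)"
  proof
    assume "\<exists>k. w = k *\<^sub>R v"
    then obtain k where "w = k *\<^sub>R v" by blast
    then have "w = (k / c) *\<^sub>R c *\<^sub>R v" using assms by simp
    then show "\<exists>k. w = k *\<^sub>R c *\<^sub>R v" by blast
  qed auto
  then show "w \<in> line_of (c *\<^sub>R v) \<longleftrightarrow> w \<in> line_of v" by (simp add: mem_line)
qed

definition proj_open :: "('a::real_normed_vector) set set \<Rightarrow> bool" where
  "proj_open U \<longleftrightarrow> U \<subseteq> proj_space \<and>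
      openin (subtopology euclidean (- {0})) {v. v \<noteq> 0 \<and> line_of v \<in> U}"

lemma istopology_proj: "istopology (proj_open :: ('a::real_normed_vector) set set \<Rightarrow> bool)"
proof -
  have 1: "proj_open (S \<inter> T)" if "proj_open S" "proj_open T" for S T :: "'a set set"
  proof -
    have "{v. v \<noteq> 0 \<and> line_of v \<in> S \<inter> T} =
      {v. v \<noteq> 0 \<and> line_of v \<in> S} \<inter> {v. v \<noteq> 0 \<and> line_of v \<in> T}" by auto
    then show ?thesis using that unfolding proj_open_def by (auto intro: openin_Int)
  qed
  have 2: "proj_open (\<Union>K)" if K: "\<forall>S\<in>K. proj_open S" for K :: "'a set set set"
  proof -
    have "{v. v \<noteq> 0 \<and> line_of v \<in> \<Union>K} = \<Union>((\<lambda>S. {v. v \<noteq> 0 \<and> line_of v \<in> S}) ` K)" by auto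
    moreover have "openin (subtopology euclidean (- {0})) (\<Union>((\<lambda>S. {v. v \<noteq> 0 \<and> line_of v \<in> S}) ` K))"
      using K unfolding proj_open_def by (intro openin_Union) auto
    ultimately show ?thesis using K unfolding proj_open_def by auto
  qed
  show ?thesis unfolding istopology_def using 1 2 by blast
qed

lemma openin_proj: "openin proj_topology U = proj_open U"
  unfolding proj_topology_def proj_open_def[abs_def, symmetric]
  by (simp add: topology_inverse'[OF istopology_proj])


lemma chart_cont:
  fixes \<phi> :: "'c::topological_space \<Rightarrow> ('a::real_normed_vector) set"
    and g :: "'a \<Rightarrow> 'b::topological_space"
  assumes c\<phi>: "continuous_map (top_of_set D) proj_topology \<phi>"
    and Oc: "open Oc" "0 \<notin> Oc" "\<And>v c. v \<in> Oc \<Longrightarrow> c \<noteq> 0 \<Longrightarrow> c *\<^sub>R v \<in> Oc"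
    and g: "continuous_on Oc g" "\<And>v c. v \<in> Oc \<Longrightarrow> c \<noteq> 0 \<Longrightarrow> g (c *\<^sub>R v) = g v"
    and F: "\<And>v. v \<in> Oc \<Longrightarrow> F (line_of v) = g v"
  shows "openin (top_of_set D) {t\<in>D. \<phi> t \<in> line_of ` Oc}"
    and "continuous_on {t\<in>D. \<phi> t \<in> line_of ` Oc} (F \<circ> \<phi>)"
proof -
  have key: "openin (top_of_set D) {t\<in>D. \<phi> t \<in> line_of ` {v\<in>Oc. g v \<in> W}}" if W: "open W" for W
  proof -
    let ?U = "line_of ` {v\<in>Oc. g v \<in> W}"
    have pre: "{v. v \<noteq> 0 \<and> line_of v \<in> ?U} = {v\<in>Oc. g v \<in> W}"
    proof (intro Set.set_eqI iffI)
      fix v assume v: "v \<in> {v. v \<noteq> 0 \<and> line_of v \<in> ?U}"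
      then obtain v' where v': "v' \<in> Oc" "g v' \<in> W" "line_of v = line_of v'" by auto
      then obtain c where c: "c \<noteq> 0" "v = c *\<^sub>R v'" using line_eq v by blast
      then show "v \<in> {v\<in>Oc. g v \<in> W}" using v' Oc(3) g(2) by auto
        next
      fix v assume v: "v \<in> {v\<in>Oc. g v \<in> W}"
      then have "v \<noteq> 0" using Oc(2) by blast
      moreover have "line_of v \<in> ?U" using v by blast
      ultimately show "v \<in> {v. v \<noteq> 0 \<and> line_of v \<in> ?U}" by blast
    qed
    obtain A where A: "open A" "A \<inter> Oc = g -` W \<inter> Oc"
      using g(1) W by (auto simp: continuous_on_open_invariant)
    have "{v\<in>Oc. g v \<in> W} = A \<inter> Oc" using A by auto
    then have "open {v\<in>Oc. g v \<in> W}" using A Oc(1) by (metis open_Int)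
    moreover have "{v\<in>Oc. g v \<in> W} \<subseteq> - {0}" using Oc(2) by auto
    ultimately have "openin (subtopology euclidean (- {0})) {v\<in>Oc. g v \<in> W}"
      unfolding openin_subtopology by (intro exI[of _ "{v\<in>Oc. g v \<in> W}"]) auto
    moreover have "?U \<subseteq> proj_space" using Oc(2) by (auto simp: proj_space_def)
    ultimately have "openin proj_topology ?U" by (simp add: openin_proj proj_open_def pre)
    from openin_continuous_map_preimage[OF c\<phi> this] show ?thesis by simp
  qed
  show op: "openin (top_of_set D) {t\<in>D. \<phi> t \<in> line_of ` Oc}"
    using key[OF open_UNIV] by simp
  let ?D' = "{t\<in>D. \<phi> t \<in> line_of ` Oc}"
  have "continuous_map (top_of_set ?D') euclidean (F \<circ> \<phi>)"
    unfolding continuous_map_def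
  proof (intro conjI allI impI)
    show "F \<circ> \<phi> \<in> topspace (top_of_set ?D') \<rightarrow> topspace euclidean" by simp
    fix W :: "'b set" assume "openin euclidean W"
    then have W: "open W" by simp
    have eq: "{t \<in> topspace (top_of_set ?D'). (F \<circ> \<phi>) t \<in> W} = {t\<in>D. \<phi> t \<in> line_of ` {v\<in>Oc. g v \<in> W}}"
    proof (intro Set.set_eqI iffI)
      fix t assume "t \<in> {t \<in> topspace (top_of_set ?D'). (F \<circ> \<phi>) t \<in> W}"
      then have t: "t \<in> D" "\<phi> t \<in> line_of ` Oc" "F (\<phi> t) \<in> W" by auto
      then obtain v where v: "v \<in> Oc" "\<phi> t = line_of v" by blast
      then have "g v \<in> W" using t(3) F[OF v(1)] by simp
      then show "t \<in> {t\<in>D. \<phi> t \<in> line_of ` {v\<in>Oc. g v \<in> W}}" using t(1) v by blast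
    next
      fix t assume "t \<in> {t\<in>D. \<phi> t \<in> line_of ` {v\<in>Oc. g v \<in> W}}"
      then have t: "t \<in> D" "\<phi> t \<in> line_of ` {v\<in>Oc. g v \<in> W}" by auto
      then obtain v where v: "v \<in> Oc" "g v \<in> W" "\<phi> t = line_of v" by blast
      then have "F (\<phi> t) \<in> W" using F[OF v(1)] by simp
      moreover have "t \<in> ?D'" using t(1) v by blast
      ultimately show "t \<in> {t \<in> topspace (top_of_set ?D'). (F \<circ> \<phi>) t \<in> W}" by simp
    qed
    show "openin (top_of_set ?D') {t \<in> topspace (top_of_set ?D'). (F \<circ> \<phi>) t \<in> W}"
      unfolding eq by (rule openin_subset_trans[OF key[OF W]]) auto
  qed
  then show "continuous_on ?D' (F \<circ> \<phi>)" by simp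
qed


context decomp
begin

lemma cont_pp: "continuous_on S pp"
  using linear_continuous_on linear_conv_bounded_linear linear_pp by blast

lemma cont_bw: "continuous_on S (\<lambda>v. b w v)"
  using bilinear_continuous_on_compose[OF continuous_on_const continuous_on_id bil] by simp

lemma cont_bpp: "continuous_on S (\<lambda>v. b (pp v) (pp v))"
  using bilinear_continuous_on_compose[OF cont_pp cont_pp bil] by simp

definition sgs :: "real^'n \<Rightarrow> real^'n \<Rightarrow> real" where
  "sgs w v = (if b w v < 0 then 1 else -1)"
definition sel :: "real^'n \<Rightarrow> real^'n \<Rightarrow> real^'n" where
  "sel w v = (sgs w v / sqrt (b (pp v) (pp v))) *\<^sub>R v"
definition Ow :: "real^'n \<Rightarrow> (real^'n) set" where
  "Ow w = {v. b w v \<noteq> 0 \<and> 0 < b (pp v) (pp v)}"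
definition Fw :: "real^'n \<Rightarrow> (real^'n) set \<Rightarrow> real^'n" where
  "Fw w l = sel w (SOME v. v \<in> Ow w \<and> line_of v = l)"

lemma bpp_scale: "b (pp (c *\<^sub>R v)) (pp (c *\<^sub>R v)) = c\<^sup>2 * b (pp v) (pp v)"
  by (simp add: linear_scale[OF linear_pp] bs power2_eq_square)

lemma open_Ow: "open (Ow w)"
proof -
  have "Ow w = {v. b w v \<noteq> 0} \<inter> {v. 0 < b (pp v) (pp v)}" by (auto simp: Ow_def)
  moreover have "open {v. b w v \<noteq> 0}"
    using open_Collect_neq[OF cont_bw continuous_on_const] by simp
  moreover have "open {v. 0 < b (pp v) (pp v)}"
    using open_Collect_less[OF continuous_on_const cont_bpp] by simp
  ultimately show ?thesis by auto
qed

lemma Ow_0: "0 \<notin> Ow w" by (simp add: Ow_def bs)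

lemma Ow_scale: "v \<in> Ow w \<Longrightarrow> c \<noteq> 0 \<Longrightarrow> c *\<^sub>R v \<in> Ow w"
  by (simp add: Ow_def bpp_scale bs)

lemma sel_scale:
  assumes v: "v \<in> Ow w" and c: "c \<noteq> 0"
  shows "sel w (c *\<^sub>R v) = sel w v"
proof -
  define r where "r = sqrt (b (pp v) (pp v))"
  have r: "r > 0" using v by (simp add: Ow_def r_def)
  have sq: "sqrt (b (pp (c *\<^sub>R v)) (pp (c *\<^sub>R v))) = \<bar>c\<bar> * r"
    by (simp add: bpp_scale real_sqrt_mult r_def)
  have bw: "b w (c *\<^sub>R v) = c * b w v" by (simp add: bs)
  have bwv: "b w v \<noteq> 0" using v by (simp add: Ow_def)
  show ?thesis
  proof (cases "c > 0")
    case True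
    then have "sgs w (c *\<^sub>R v) = sgs w v" using bw by (simp add: sgs_def zero_less_mult_iff mult_less_0_iff)
    then show ?thesis using True r by (simp add: sel_def sq r_def[symmetric])
  next
    case False
    then have cn: "c < 0" using c by simp
    then have "sgs w (c *\<^sub>R v) = - sgs w v" using bw bwv
      by (auto simp: sgs_def mult_less_0_iff)
    then show ?thesis using cn r by (simp add: sel_def sq r_def[symmetric])
  qed
qed

lemma Fw_line: "v \<in> Ow w \<Longrightarrow> Fw w (line_of v) = sel w v"
proof -
  assume v: "v \<in> Ow w"
  define v' where "v' = (SOME v'. v' \<in> Ow w \<and> line_of v' = line_of v)"
  have v': "v' \<in> Ow w \<and> line_of v' = line_of v"
    unfolding v'_def by (rule someI[of _ v]) (use v in simp)
  then have "v' \<noteq> 0" using Ow_0 by metis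
  then obtain c where c: "c \<noteq> 0" "v' = c *\<^sub>R v" using line_eq v' by blast
  then show ?thesis using sel_scale[OF v c(1)] by (simp add: Fw_def v'_def[symmetric])
qed

lemma cont_sel: "continuous_on (Ow w) (sel w)"
proof -
  let ?O1 = "{v. b w v < 0 \<and> 0 < b (pp v) (pp v)}" and ?O2 = "{v. b w v > 0 \<and> 0 < b (pp v) (pp v)}"
  have eq: "Ow w = ?O1 \<union> ?O2" by (auto simp: Ow_def)
  have o1: "open ?O1"
    using open_Collect_less[OF cont_bw continuous_on_const, of w 0]
      open_Collect_less[OF continuous_on_const cont_bpp, of 0] by (simp add: Collect_conj_eq open_Int)
  have o2: "open ?O2"
    using open_Collect_less[OF continuous_on_const cont_bw, of 0 w]
      open_Collect_less[OF continuous_on_const cont_bpp, of 0] by (simp add: Collect_conj_eq open_Int)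
  have c1: "continuous_on ?O1 (sel w)"
  proof (rule continuous_on_eq)
    show "continuous_on ?O1 (\<lambda>v. (1 / sqrt (b (pp v) (pp v))) *\<^sub>R v)"
      by (intro continuous_intros cont_bpp) auto
    show "\<And>x. x \<in> ?O1 \<Longrightarrow> (1 / sqrt (b (pp x) (pp x))) *\<^sub>R x = sel w x"
      by (simp add: sel_def sgs_def)
  qed
  have c2: "continuous_on ?O2 (sel w)"
  proof (rule continuous_on_eq)
    show "continuous_on ?O2 (\<lambda>v. (-1 / sqrt (b (pp v) (pp v))) *\<^sub>R v)"
      by (intro continuous_intros cont_bpp) auto
    show "\<And>x. x \<in> ?O2 \<Longrightarrow> (-1 / sqrt (b (pp x) (pp x))) *\<^sub>R x = sel w x"
      by (simp add: sel_def sgs_def)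
  qed
  show ?thesis unfolding eq by (rule continuous_on_open_Un[OF o1 o2 c1 c2])
qed

lemma sel_props:
  assumes v: "v \<in> Ow w"
  shows "\<exists>k. k \<noteq> 0 \<and> sel w v = k *\<^sub>R v"
    and "b (pp (sel w v)) (pp (sel w v)) = 1"
    and "b w (sel w v) < 0"
proof -
  define r where "r = sqrt (b (pp v) (pp v))"
  have r: "r > 0" using v by (simp add: Ow_def r_def)
  have r2: "r\<^sup>2 = b (pp v) (pp v)" using v by (simp add: Ow_def r_def)
  have s: "sgs w v \<noteq> 0" "(sgs w v)\<^sup>2 = 1" by (auto simp: sgs_def)
  show "\<exists>k. k \<noteq> 0 \<and> sel w v = k *\<^sub>R v"
    using s r by (intro exI[of _ "sgs w v / r"]) (auto simp: sel_def r_def[symmetric])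
  show "b (pp (sel w v)) (pp (sel w v)) = 1"
    unfolding sel_def bpp_scale r_def[symmetric] using r r2 s v
    by (simp add: power_divide Ow_def)
  have bwv: "b w v \<noteq> 0" using v by (simp add: Ow_def)
  show "b w (sel w v) < 0"
    using r bwv by (auto simp: sel_def sgs_def bs r_def[symmetric] divide_less_0_iff)
qed

lemma chart_sel:
  fixes \<phi> :: "'c::topological_space \<Rightarrow> (real^'n) set"
  assumes "continuous_map (top_of_set D) proj_topology \<phi>"
  shows "openin (top_of_set D) {t\<in>D. \<phi> t \<in> line_of ` Ow w}"
    and "continuous_on {t\<in>D. \<phi> t \<in> line_of ` Ow w} (Fw w \<circ> \<phi>)"
  using chart_cont[OF assms open_Ow Ow_0 Ow_scale cont_sel sel_scale Fw_line] by auto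

end



context decomp
begin

lemma scale_one:
  assumes "x = l *\<^sub>R y" "l > 0" "b x x = 1" "b y y = 1"
  shows "x = y"
proof -
  have "b x x = l\<^sup>2 * b y y" using assms(1) by (simp add: bs power2_eq_square)
  then have "l\<^sup>2 = 1" using assms by simp
  then have "l = 1" using assms(2) by (simp add: power2_eq_1_iff)
  then show ?thesis using assms(1) by simp
qed

lemma uniq_norm:
  assumes "y = c *\<^sub>R x" "b (pp x) (pp x) = 1" "b (pp y) (pp y) = 1" "b w x < 0" "b w y < 0"
  shows "y = x"
proof -
  have "b (pp y) (pp y) = c\<^sup>2 * b (pp x) (pp x)" using assms(1) bpp_scale by simp
  then have "c\<^sup>2 = 1" using assms by simp
  moreover have "b w y = c * b w x" using assms(1) by (simp add: bs)
  then have "c > 0" using assms(4,5) by (simp add: mult_less_0_iff)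
  ultimately have "c = 1" by (simp add: power2_eq_1_iff)
  then show ?thesis using assms(1) by simp
qed

end

locale setting = decompV b P N V for b :: "real^'n \<Rightarrow> real^'n \<Rightarrow> real" and P N V +
  fixes \<phi> :: "real^'n \<Rightarrow> (real^'n) set" and D :: "(real^'n) set" and t0 t1 t2 :: "real^'n"
  assumes c\<phi>: "continuous_map (top_of_set D) proj_topology \<phi>"
    and inj\<phi>: "inj_on \<phi> D"
    and lines: "\<And>t. t \<in> D \<Longrightarrow> \<exists>v. v \<noteq> 0 \<and> b v v = 0 \<and> \<phi> t = line_of v"
    and trip: "\<And>t t' t''. t \<in> D \<Longrightarrow> t' \<in> D \<Longrightarrow> t'' \<in> D \<Longrightarrow> t \<noteq> t' \<Longrightarrow> t' \<noteq> t'' \<Longrightarrow> t \<noteq> t''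
         \<Longrightarrow> positive_triple b (\<phi> t) (\<phi> t') (\<phi> t'')"
    and three: "t0 \<in> D" "t1 \<in> D" "t2 \<in> D" "t0 \<noteq> t1" "t1 \<noteq> t2" "t0 \<noteq> t2"
begin

lemma rep_iso: "t \<in> D \<Longrightarrow> x \<noteq> 0 \<Longrightarrow> line_of x = \<phi> t \<Longrightarrow> b x x = 0"
proof -
  assume t: "t \<in> D" and x: "x \<noteq> 0" "line_of x = \<phi> t"
  obtain v where v: "v \<noteq> 0" "b v v = 0" "\<phi> t = line_of v" using lines t by blast
  obtain c where "x = c *\<^sub>R v" using line_eq[of x v] x v by auto
  then show "b x x = 0" using v by (simp add: bs)
qed

lemma third: "t \<in> D \<Longrightarrow> t' \<in> D \<Longrightarrow> \<exists>t''\<in>D. t'' \<noteq> t \<and> t'' \<noteq> t'"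
  using three by metis

lemma K1:
  assumes t: "t \<in> D" "t' \<in> D" "t \<noteq> t'"
    and x: "x \<noteq> 0" "line_of x = \<phi> t" and x': "x' \<noteq> 0" "line_of x' = \<phi> t'"
  shows "b x x' \<noteq> 0"
proof -
  obtain t'' where t'': "t'' \<in> D" "t'' \<noteq> t" "t'' \<noteq> t'" using third t by blast
  obtain w where w: "w \<noteq> 0" "b w w = 0" "\<phi> t'' = line_of w" using lines t'' by blast
  have "positive_triple b (line_of w) (line_of x) (line_of x')"
    using trip[OF t''(1) t(1,2)] t t'' w x x' by auto
  from triple_sig[OF this] show ?thesis
    using T1[of w x x'] rep_iso t x x' by auto
qed

lemma K2:
  assumes t: "tb \<in> D" "t \<in> D" "t' \<in> D" "tb \<noteq> t" "t \<noteq> t'" "tb \<noteq> t'"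
    and w: "w \<noteq> 0" "line_of w = \<phi> tb"
    and x: "x \<noteq> 0" "line_of x = \<phi> t" and x': "x' \<noteq> 0" "line_of x' = \<phi> t'"
    and neg: "b w x < 0" "b w x' < 0"
  shows "b x x' < 0"
proof -
  have "positive_triple b (line_of w) (line_of x) (line_of x')"
    using trip[OF t(1,2,3)] t w x x' by auto
  from triple_sig[OF this] show ?thesis
    using T2[of w x x'] rep_iso t w x x' neg by auto
qed

lemma in_chart:
  assumes t: "tb \<in> D" "t \<in> D" "t \<noteq> tb" and w: "w \<noteq> 0" "line_of w = \<phi> tb"
  shows "\<phi> t \<in> line_of ` Ow w"
proof -
  obtain v where v: "v \<noteq> 0" "b v v = 0" "\<phi> t = line_of v" using lines t by blast
  have "b w v \<noteq> 0" using K1[OF t(1,2) _ w] v t by auto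
  moreover have "0 < b (pp v) (pp v)" using iso_pp_pos v by blast
  ultimately have "v \<in> Ow w" by (simp add: Ow_def)
  then show ?thesis using v by blast
qed

lemma Fw_props:
  assumes t: "tb \<in> D" "t \<in> D" "t \<noteq> tb" and w: "w \<noteq> 0" "line_of w = \<phi> tb"
  shows "Fw w (\<phi> t) \<noteq> 0" "line_of (Fw w (\<phi> t)) = \<phi> t"
    "b (pp (Fw w (\<phi> t))) (pp (Fw w (\<phi> t))) = 1" "b w (Fw w (\<phi> t)) < 0"
proof -
  obtain v where v: "v \<in> Ow w" "\<phi> t = line_of v" using in_chart[OF assms] by blast
  have F: "Fw w (\<phi> t) = sel w v" using Fw_line v by simp
  obtain k where k: "k \<noteq> 0" "sel w v = k *\<^sub>R v" using sel_props(1)[OF v(1)] by blast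
  have v0: "v \<noteq> 0" using v Ow_0 by metis
  show "Fw w (\<phi> t) \<noteq> 0" using F k v0 by simp
  show "line_of (Fw w (\<phi> t)) = \<phi> t" using F k v line_scale by simp
  show "b (pp (Fw w (\<phi> t))) (pp (Fw w (\<phi> t))) = 1" using F sel_props(2)[OF v(1)] by simp
  show "b w (Fw w (\<phi> t)) < 0" using F sel_props(3)[OF v(1)] by simp
qed

end


context setting
begin

definition u0 where "u0 = (SOME v. v \<noteq> 0 \<and> b v v = 0 \<and> \<phi> t0 = line_of v)"

lemma u0: "u0 \<noteq> 0" "line_of u0 = \<phi> t0"
proof -
  have "\<exists>v. v \<noteq> 0 \<and> b v v = 0 \<and> \<phi> t0 = line_of v" using lines three by blast
  then have "u0 \<noteq> 0 \<and> b u0 u0 = 0 \<and> \<phi> t0 = line_of u0" unfolding u0_def by (rule someI_ex)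
  then show "u0 \<noteq> 0" "line_of u0 = \<phi> t0" by auto
qed

definition u1 where "u1 = Fw u0 (\<phi> t1)"

lemma u1: "u1 \<noteq> 0" "line_of u1 = \<phi> t1" "b (pp u1) (pp u1) = 1" "b u0 u1 < 0"
  using Fw_props[OF three(1) three(2) three(4)[symmetric] u0] by (auto simp: u1_def)

definition s where "s t = (if t = t0 then Fw u1 (\<phi> t) else Fw u0 (\<phi> t))"

lemma s_props:
  assumes t: "t \<in> D"
  shows "s t \<noteq> 0" "line_of (s t) = \<phi> t" "b (pp (s t)) (pp (s t)) = 1"
proof -
  have "s t \<noteq> 0 \<and> line_of (s t) = \<phi> t \<and> b (pp (s t)) (pp (s t)) = 1"
  proof (cases "t = t0")
    case True
    then show ?thesis using Fw_props[OF three(2) t _ u1(1,2)] three by (simp add: s_def)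
  next
    case False
    then show ?thesis using Fw_props[OF three(1) t False u0] by (simp add: s_def)
  qed
  then show "s t \<noteq> 0" "line_of (s t) = \<phi> t" "b (pp (s t)) (pp (s t)) = 1" by auto
qed

lemma s_neg0: "t \<in> D \<Longrightarrow> t \<noteq> t0 \<Longrightarrow> b u0 (s t) < 0"
  using Fw_props(4)[OF three(1) _ _ u0] by (simp add: s_def)

lemma agree:
  assumes t: "t \<in> D" "t \<noteq> t0" "t \<noteq> t1"
  shows "Fw u0 (\<phi> t) = Fw u1 (\<phi> t)"
proof -
  let ?x = "Fw u0 (\<phi> t)" and ?y = "Fw u1 (\<phi> t)"
  note px = Fw_props[OF three(1) t(1,2) u0]
  note py = Fw_props[OF three(2) t(1,3) u1(1,2)]
  obtain c where c: "?y = c *\<^sub>R ?x" using line_eq[of ?y ?x] px py by auto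
  have "b u1 ?x < 0"
    using K2[OF three(1,2) t(1) three(4) _ _ u0 u1(1,2) px(1,2) u1(4) px(4)] t by auto
  then show ?thesis using uniq_norm[OF c px(3) py(3) _ py(4)] by simp
qed

lemma s_neg1: "t \<in> D \<Longrightarrow> t \<noteq> t1 \<Longrightarrow> b u1 (s t) < 0"
proof -
  assume t: "t \<in> D" "t \<noteq> t1"
  have "s t = Fw u1 (\<phi> t)" using agree t by (simp add: s_def)
  then show ?thesis using Fw_props(4)[OF three(2) t u1(1,2)] by simp
qed

lemma s_t1: "s t1 = u1" using three by (simp add: s_def u1_def)

lemma s_pair:
  assumes t: "t \<in> D" "t' \<in> D" "t \<noteq> t'"
  shows "b (s t) (s t') < 0"
proof -
  note st = s_props[OF t(1)] and st' = s_props[OF t(2)]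
  show ?thesis
  proof (cases "t \<noteq> t0 \<and> t' \<noteq> t0")
    case True
    then show ?thesis
      using K2[OF three(1) t(1,2) _ t(3) _ u0 st(1,2) st'(1,2) s_neg0 s_neg0] t by auto
  next
    case False
    show ?thesis
    proof (cases "t \<noteq> t1 \<and> t' \<noteq> t1")
      case True
      then show ?thesis
        using K2[OF three(2) t(1,2) _ t(3) _ u1(1,2) st(1,2) st'(1,2) s_neg1 s_neg1] t by auto
    next
      case False2: False
      then have "(t = t0 \<and> t' = t1) \<or> (t = t1 \<and> t' = t0)" using False t(3) three by auto
      then show ?thesis
        using s_neg1[OF three(1) three(4)] s_t1 symm by auto
    qed
  qed
qed

lemma s_cont: "continuous_on D s"
proof -
  have D: "D = (D - {t0}) \<union> (D - {t1})" using three by auto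
  note ch0 = chart_sel[OF c\<phi>, of u0] and ch1 = chart_sel[OF c\<phi>, of u1]
  have sub0: "D - {t0} \<subseteq> {t\<in>D. \<phi> t \<in> line_of ` Ow u0}"
    using in_chart[OF three(1) _ _ u0] by auto
  have sub1: "D - {t1} \<subseteq> {t\<in>D. \<phi> t \<in> line_of ` Ow u1}"
    using in_chart[OF three(2) _ _ u1(1,2)] by auto
  have c0: "continuous_on (D - {t0}) s"
    by (rule continuous_on_eq[OF continuous_on_subset[OF ch0(2) sub0]]) (auto simp: s_def)
  have c1: "continuous_on (D - {t1}) s"
    by (rule continuous_on_eq[OF continuous_on_subset[OF ch1(2) sub1]]) (auto simp: s_def agree)
  have "openin (top_of_set D) (D - {t0})" "openin (top_of_set D) (D - {t1})"
    by (simp_all add: openin_delete)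
  then show ?thesis using continuous_on_Un_local_open[of "D - {t0}" "D - {t1}" s] c0 c1 D by simp
qed

end



context setting
begin

lemma final:
  assumes S: "subspace S" "D = sphere 0 1 \<inter> S" "dim S = dim P" "dim P \<ge> 2"
  shows "\<exists>t\<in>D. \<phi> t \<in> proj_of V"
proof -
  define X where "X t = pp (s t)" for t
  define Y where "Y t = Yl (s t)" for t
  have iso: "b (s t) (s t) = 0" if "t \<in> D" for t
    using rep_iso[OF that s_props(1,2)[OF that]] .
  have bX: "b (X t) (X t) = 1" if "t \<in> D" for t using s_props(3)[OF that] by (simp add: X_def)
  have bY: "b (Y t) (Y t) = 1" if "t \<in> D" for t
    using b_Yl[of "s t" "s t"] b_split[of "s t" "s t"] iso[OF that] s_props(3)[OF that]
    by (simp add: Y_def)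
  have lt: "b (X t) (X t') < b (Y t) (Y t')" if "t \<in> D" "t' \<in> D" "t \<noteq> t'" for t t'
    using s_pair[OF that] b_split[of "s t" "s t'"] b_Yl[of "s t" "s t'"] by (simp add: X_def Y_def)
  have XP: "X t \<in> P" and YP: "Y t \<in> P" for t by (simp_all add: X_def Y_def pp_in Yl_in)
  have X0: "X t \<noteq> 0" and Y0: "Y t \<noteq> 0" if "t \<in> D" for t
    using bX[OF that] bY[OF that] by (auto simp: bs)
  have cX: "continuous_on D X" unfolding X_def
    by (rule continuous_on_compose2[OF cont_pp s_cont]) auto
  have cY: "continuous_on D Y" unfolding Y_def
    by (rule continuous_on_compose2[OF _ s_cont, of UNIV])
       (use linear_continuous_on linear_conv_bounded_linear linear_Yl in auto)
  define X' where "X' t = X t /\<^sub>R norm (X t)" for t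
  define Y' where "Y' t = Y t /\<^sub>R norm (Y t)" for t
  have ratio: "x = (norm x / norm y) *\<^sub>R y" if "x /\<^sub>R norm x = y /\<^sub>R norm y" "x \<noteq> 0" "y \<noteq> 0"
    for x y :: "real^'n"
  proof -
    have "x = norm x *\<^sub>R (x /\<^sub>R norm x)" using that(2) by simp
    also have "\<dots> = norm x *\<^sub>R (y /\<^sub>R norm y)" by (simp only: that(1))
    finally have h: "x = norm x *\<^sub>R (y /\<^sub>R norm y)" .
    have "norm x *\<^sub>R (y /\<^sub>R norm y) = (norm x / norm y) *\<^sub>R y"
      by (simp add: divide_inverse)
    then show ?thesis using h by metis
  qed
  show ?thesis
  proof -
    have "\<exists>t \<in> sphere 0 1 \<inter> S. X' t = Y' t"
    proof (rule coincidence[OF S(1) subP S(3) S(4)])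
      show "continuous_on (sphere 0 1 \<inter> S) X'" unfolding X'_def S(2)[symmetric]
        by (intro continuous_intros cX) (use X0 in auto)
      show "continuous_on (sphere 0 1 \<inter> S) Y'" unfolding Y'_def S(2)[symmetric]
        by (intro continuous_intros cY) (use Y0 in auto)
      show "X' ` (sphere 0 1 \<inter> S) \<subseteq> sphere 0 1 \<inter> P"
        using X0 XP subspace_scale[OF subP] by (auto simp: X'_def S(2))
      show "Y' ` (sphere 0 1 \<inter> S) \<subseteq> sphere 0 1 \<inter> P"
        using Y0 YP subspace_scale[OF subP] by (auto simp: Y'_def S(2))
      show "inj_on X' (sphere 0 1 \<inter> S)"
      proof (rule inj_onI)
        fix t t' assume t: "t \<in> sphere 0 1 \<inter> S" "t' \<in> sphere 0 1 \<inter> S" and e: "X' t = X' t'"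
        then have tD: "t \<in> D" "t' \<in> D" using S(2) by auto
        have "X t = X t'"
          by (rule scale_one[OF ratio[OF e[unfolded X'_def] X0 X0]])
             (use tD X0 bX in \<open>auto simp: divide_pos_pos\<close>)
        show "t = t'"
        proof (rule ccontr)
          assume "t \<noteq> t'"
          then have "b (X t) (X t') < b (Y t) (Y t')" using lt tD by blast
          moreover have "b (Y t) (Y t') \<le> 1" using P_cs(1)[OF YP YP bY bY] tD by blast
          moreover have "b (X t) (X t') = 1" using \<open>X t = X t'\<close> bX tD by simp
          ultimately show False by simp
        qed
      qed
      show "Y' t \<noteq> - Y' t'" if t: "t \<in> sphere 0 1 \<inter> S" "t' \<in> sphere 0 1 \<inter> S" for t t'
      proof
        assume e: "Y' t = - Y' t'"
        have tD: "t \<in> D" "t' \<in> D" using t S(2) by auto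
        have e': "Y t /\<^sub>R norm (Y t) = (- Y t') /\<^sub>R norm (- Y t')" using e by (simp add: Y'_def)
        have nY: "- Y t' \<noteq> 0" using Y0 tD by simp
        have bnY: "b (- Y t') (- Y t') = 1" using bY tD by (simp add: bs)
        have eq: "Y t = - Y t'"
          by (rule scale_one[OF ratio[OF e' Y0 nY]]) (use tD Y0 bY bnY in \<open>auto simp: divide_pos_pos\<close>)
        show False
        proof (cases "t = t'")
          case True
          then have "Y t + Y t = 0" using eq by (metis add.right_inverse)
          then have "2 *\<^sub>R Y t = 0" by (simp add: scaleR_2)
          then show False using Y0 tD by simp
        next
          case False
          then have "b (X t) (X t') < b (Y t) (Y t')" using lt tD by blast
          moreover have "b (Y t) (Y t') = -1" using bY[OF tD(2)] by (simp only: eq bs(7))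
          moreover have "- 1 \<le> b (X t) (X t')" using P_cs(2)[OF XP XP bX bX] tD by blast
          ultimately show False by simp
        qed
      qed
    qed
    then obtain t where t: "t \<in> D" "X' t = Y' t" using S(2) by auto
    have "X t = Y t"
      by (rule scale_one[OF ratio[OF t(2)[unfolded X'_def Y'_def] X0 Y0]])
         (use t X0 Y0 bX bY in \<open>auto simp: divide_pos_pos\<close>)
    then have "s t \<in> V" using Yl_fix by (simp add: X_def Y_def)
    then have "\<phi> t \<in> proj_of V" using s_props(1,2)[OF t(1)] unfolding proj_of_def by blast
    then show ?thesis using t by blast
  qed
qed

end


theorem mainTheorem19:
  fixes b :: "real^'n \<Rightarrow> real^'n \<Rightarrow> real"
    and p q :: nat
    and \<Lambda> :: "(real^'n) set set"
    and V :: "(real^'n) set"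
  assumes "p \<ge> 2" and "q \<ge> 1"
    and "CARD('n) = p + q + 1"
    and "bilinear b" and "\<forall>x y. b x y = b y x"
    and "has_signature b UNIV p (q + 1)"
    and "positive_sphere b p \<Lambda>"
    and "maximal_totally_isotropic b p q V"
    and "p \<ge> q + 1"
  shows "proj_of V \<inter> \<Lambda> \<noteq> {}"
proof -
  interpret bform b using assms(4,5) by unfold_locales auto
  obtain P N where PN: "subspace P" "subspace N" "dim P = p" "dim N = q + 1"
     "\<forall>x\<in>P. x \<noteq> 0 \<longrightarrow> b x x > 0" "\<forall>y\<in>N. y \<noteq> 0 \<longrightarrow> b y y < 0"
     "\<forall>x\<in>P. \<forall>y\<in>N. b x y = 0" "\<forall>u. \<exists>x\<in>P. \<exists>y\<in>N. u = x + y"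
    using decomp_exists[OF assms(6)] by blast
  interpret decomp b P N by unfold_locales (use PN in auto)
  have Vp: "subspace V" "\<forall>x\<in>V. \<forall>y\<in>V. b x y = 0" "dim V = q + 1"
    using assms(8,9) by (auto simp: maximal_totally_isotropic_def min_def)
  interpret decompV b P N V by unfold_locales (use Vp PN in auto)
  have Lsub: "\<Lambda> \<subseteq> isotropic_lines b"
    and Lhom: "subtopology proj_topology \<Lambda> homeomorphic_space nsphere (p - 1)"
    and Ltrip: "\<And>x y z. x\<in>\<Lambda> \<Longrightarrow> y\<in>\<Lambda> \<Longrightarrow> z\<in>\<Lambda> \<Longrightarrow> x \<noteq> y \<Longrightarrow> y \<noteq> z \<Longrightarrow> x \<noteq> z
        \<Longrightarrow> positive_triple b x y z"
    using assms(7) unfolding positive_sphere_def by blast+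
  have "p \<le> card (Basis :: (real^'n) set)" using assms(3) by simp
  then obtain B where B: "B \<subseteq> (Basis :: (real^'n) set)" "card B = p"
    by (metis obtain_subset_with_card_n)
  have indB: "independent B" using B(1) independent_Basis independent_mono by blast
  have orthB: "pairwise orthogonal B" using B(1) orthogonal_Basis pairwise_subset by blast
  have normB: "\<And>u. u \<in> B \<Longrightarrow> norm u = 1" using B(1) norm_Basis by blast
  obtain f0 :: "(nat \<Rightarrow> real) \<Rightarrow> real^'n" and g0
    where fg: "homeomorphic_maps (nsphere (p - 1)) (top_of_set (sphere 0 1 \<inter> span B)) f0 g0"
    using homeomorphic_maps_nsphere_euclidean_sphere[OF indB orthB B(2) _ normB] assms(1) by auto
  obtain h0 k0 where hk: "homeomorphic_maps (subtopology proj_topology \<Lambda>) (nsphere (p - 1)) h0 k0"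
    using Lhom unfolding homeomorphic_space_def by blast
  define D where "D = sphere 0 1 \<inter> span B"
  define \<phi> where "\<phi> = k0 \<circ> g0"
  have hm: "homeomorphic_maps (top_of_set D) (subtopology proj_topology \<Lambda>) \<phi> (f0 \<circ> h0)"
  proof -
    have a: "homeomorphic_maps (top_of_set D) (nsphere (p - 1)) g0 f0"
      using fg unfolding D_def by (rule homeomorphic_maps_sym[THEN iffD1])
    have c: "homeomorphic_maps (nsphere (p - 1)) (subtopology proj_topology \<Lambda>) k0 h0"
      using hk by (rule homeomorphic_maps_sym[THEN iffD1])
    show ?thesis unfolding \<phi>_def by (rule homeomorphic_maps_compose[OF conjI[OF a c]])
  qed
  then have cm: "continuous_map (top_of_set D) (subtopology proj_topology \<Lambda>) \<phi>"
    and inv: "\<And>t. t \<in> D \<Longrightarrow> (f0 \<circ> h0) (\<phi> t) = t"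
    by (auto simp: homeomorphic_maps_def)
  have c\<phi>: "continuous_map (top_of_set D) proj_topology \<phi>" and \<phi>L: "\<And>t. t \<in> D \<Longrightarrow> \<phi> t \<in> \<Lambda>"
    using cm by (auto simp: continuous_map_in_subtopology)
  have inj\<phi>: "inj_on \<phi> D" using inv by (metis inj_on_inverseI)
  obtain e1 where e1: "e1 \<in> B" using B(2) assms(1) by fastforce
  have "card (B - {e1}) \<ge> 1" using B(2) assms(1) e1
    by (metis card_Diff_singleton_if diff_le_mono one_add_one add_diff_cancel_right')
  then obtain e2 where e2: "e2 \<in> B" "e2 \<noteq> e1" by (metis Diff_iff card.empty empty_iff not_one_le_zero singletonI
      all_not_in_conv)
  have n1: "norm e1 = 1" "norm e2 = 1" using normB e1 e2 by auto
  have inn: "e1 \<bullet> e2 = 0" using B(1) e1 e2 inner_not_same_Basis by blast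
  have three: "e1 \<in> D" "- e1 \<in> D" "e2 \<in> D" "e1 \<noteq> - e1" "- e1 \<noteq> e2" "e1 \<noteq> e2"
  proof -
    show "e1 \<in> D" "- e1 \<in> D" "e2 \<in> D" using n1 e1 e2
      by (auto simp: D_def span_base span_neg)
    show "e1 \<noteq> - e1"
    proof
      assume "e1 = - e1"
      then have "e1 + e1 = 0" by (metis add.right_inverse)
      then have "2 *\<^sub>R e1 = 0" by (simp add: scaleR_2)
      then show False using n1 by simp
    qed
    show "- e1 \<noteq> e2"
    proof
      assume "- e1 = e2"
      then have "e1 \<bullet> e2 = - (e1 \<bullet> e1)" by auto
      moreover have "e1 \<bullet> e1 = 1" using n1 power2_norm_eq_inner[of e1] by simp
      ultimately show False using inn by simp
    qed
    show "e1 \<noteq> e2" using e2 by simp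
  qed
  interpret setting b P N V \<phi> D e1 "- e1" e2
  proof unfold_locales
    show "continuous_map (top_of_set D) proj_topology \<phi>" by (rule c\<phi>)
    show "inj_on \<phi> D" by (rule inj\<phi>)
    show "\<exists>v. v \<noteq> 0 \<and> b v v = 0 \<and> \<phi> t = line_of v" if "t \<in> D" for t
      using \<phi>L[OF that] Lsub by (auto simp: isotropic_lines_def)
    show "positive_triple b (\<phi> t) (\<phi> t') (\<phi> t'')"
      if "t \<in> D" "t' \<in> D" "t'' \<in> D" "t \<noteq> t'" "t' \<noteq> t''" "t \<noteq> t''" for t t' t''
      using Ltrip[OF \<phi>L \<phi>L \<phi>L] that inj\<phi> by (metis inj_onD)
  qed (use three in auto)
  have dB: "dim (span B) = dim P" using PN(3) B(2) indB by (simp add: dim_eq_card_independent)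
  obtain t where "t \<in> D" "\<phi> t \<in> proj_of V"
    using final[OF subspace_span D_def dB] PN(3) assms(1) by auto
  then show ?thesis using \<phi>L by blast
qed



end
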